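(* Let $\mathcal{H}$ be a nonzero reproducing kernel Hilbert space of $\mathfrak{X}$-valued entire functions with $B(\mathfrak{X})$-valued reproducing kernel $K_\gamma(z)$. Then for any $\beta\in\mathbb{C}$, $$R_\beta\mathcal{H}_\beta\subseteq\mathcal{H}\quad\text{if and only if}\quad R_\beta\mathcal{H}_\beta=\mathcal{D}.$$ Moreover, if this condition holds for some $\beta\in\mathbb{C}$, then: (1) $R_\beta$ is a bounded linear operator from $\mathcal{H}_\beta$ to $\mathcal{H}$; (2) $\operatorname{rng}(\mathfrak{T}-\beta I)=\mathcal{H}_\beta$; (3) $\beta$ is a point of regular type for $\mathfrak{T}$.
   Context: $\mathfrak{X}$ is a complex separable Hilbert space. For $\beta\in\mathbb{C}$, $\mathcal{H}_\beta=\{f\in\mathcal{H}: f(\beta)=0\}$. The generalized backward shift $R_\beta$ acts on $f$ with $f(\beta)=0$ by $(R_\beta f)(z)=\frac{f(z)}{z-\beta}$ for $z\neq\beta$ and $(R_\beta f)(\beta)=f'(\beta)$. The multiplication operator $\mathfrak{T}$ has domain $\mathcal{D}=\{f\in\mathcal{H}: zf(z)\in\mathcal{H}\}$ and $(\mathfrak{T}f)(z)=zf(z)$. A number $\gamma$ is a point of regular type of $\mathfrak{T}$ if there is $C_\gamma>0$ with $\|(\mathfrak{T}-\gamma I)f\|\ge C_\gamma\|f\|$ for all $f\in\mathcal{D}$. *)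

theory Defs
  imports "HOL-Analysis.Analysis"
begin

text \<open>The distribution has no complex inner product
spaces, so a complex Hilbert space is encoded as a real Hilbert space together
with a real-linear isometric complex structure cJ (multiplication by i),
cJ (cJ x) = - x. Complex scalar multiplication and the complex inner product
(linear in the first argument) are derived from it.\<close>

class complex_hilbert = real_inner + complete_space +
  fixes cJ :: "'a \<Rightarrow> 'a"
  assumes cJ_add: "cJ (x + y) = cJ x + cJ y"
    and cJ_scaleR: "cJ (r *\<^sub>R x) = r *\<^sub>R cJ x"
    and cJ_cJ: "cJ (cJ x) = - x"
    and cJ_inner: "inner (cJ x) (cJ y) = inner x y"

definition cscale :: "complex \<Rightarrow> 'a::complex_hilbert \<Rightarrow> 'a" where
  "cscale c x = Re c *\<^sub>R x + Im c *\<^sub>R cJ x"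

definition cinner :: "'a::complex_hilbert \<Rightarrow> 'a \<Rightarrow> complex" where
  "cinner x y = Complex (inner x y) (inner x (cJ y))"

definition cbounded_linear :: "('a::complex_hilbert \<Rightarrow> 'b::complex_hilbert) \<Rightarrow> bool" where
  "cbounded_linear T \<longleftrightarrow> bounded_linear T \<and> (\<forall>x. T (cJ x) = cJ (T x))"

definition has_cderiv :: "(complex \<Rightarrow> 'a::complex_hilbert) \<Rightarrow> 'a \<Rightarrow> complex \<Rightarrow> bool" where
  "has_cderiv f v z \<longleftrightarrow> (f has_derivative (\<lambda>h. cscale h v)) (at z)"

definition centire :: "(complex \<Rightarrow> 'a::complex_hilbert) \<Rightarrow> bool" where
  "centire f \<longleftrightarrow> (\<forall>z. \<exists>v. has_cderiv f v z)"

definition cderiv :: "(complex \<Rightarrow> 'a::complex_hilbert) \<Rightarrow> complex \<Rightarrow> 'a" where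
  "cderiv f z = (SOME v. has_cderiv f v z)"

text \<open>The Hilbert space is a type 'h, identified with the function space
range E via the injective complex-linear map E; K \<gamma> z is K_\<gamma>(z) \<in> B(X).\<close>
definition rkhs :: "('h::complex_hilbert \<Rightarrow> complex \<Rightarrow> 'x::complex_hilbert)
    \<Rightarrow> (complex \<Rightarrow> complex \<Rightarrow> 'x \<Rightarrow> 'x) \<Rightarrow> bool" where
  "rkhs E K \<longleftrightarrow>
     inj E \<and>
     (\<forall>a b. E (a + b) = (\<lambda>z. E a z + E b z)) \<and>
     (\<forall>r a. E (r *\<^sub>R a) = (\<lambda>z. r *\<^sub>R E a z)) \<and>
     (\<forall>a. E (cJ a) = (\<lambda>z. cJ (E a z))) \<and>
     (\<forall>a. centire (E a)) \<and>
     (\<forall>\<gamma> z. cbounded_linear (K \<gamma> z)) \<and>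
     (\<forall>\<gamma> u. \<exists>k. E k = (\<lambda>z. K \<gamma> z u) \<and> (\<forall>h. cinner h k = cinner (E h \<gamma>) u))"

text \<open>The space H (as a set of functions), its norm, H_\<beta>, R_\<beta>, the domain D of
the multiplication operator T and T itself.\<close>
definition Hsp :: "('h \<Rightarrow> complex \<Rightarrow> 'x) \<Rightarrow> (complex \<Rightarrow> 'x) set" where
  "Hsp E = range E"

definition normH :: "('h::complex_hilbert \<Rightarrow> complex \<Rightarrow> 'x) \<Rightarrow> (complex \<Rightarrow> 'x) \<Rightarrow> real" where
  "normH E f = norm (inv E f)"

definition Hzero :: "('h \<Rightarrow> complex \<Rightarrow> 'x::zero) \<Rightarrow> complex \<Rightarrow> (complex \<Rightarrow> 'x) set" where
  "Hzero E \<beta> = {f \<in> Hsp E. f \<beta> = 0}"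

definition Rshift :: "complex \<Rightarrow> (complex \<Rightarrow> 'x::complex_hilbert) \<Rightarrow> complex \<Rightarrow> 'x" where
  "Rshift \<beta> f z = (if z = \<beta> then cderiv f \<beta> else cscale (1 / (z - \<beta>)) (f z))"

definition Tmul :: "(complex \<Rightarrow> 'x::complex_hilbert) \<Rightarrow> complex \<Rightarrow> 'x" where
  "Tmul f z = cscale z (f z)"

definition Tdom :: "('h \<Rightarrow> complex \<Rightarrow> 'x::complex_hilbert) \<Rightarrow> (complex \<Rightarrow> 'x) set" where
  "Tdom E = {f \<in> Hsp E. Tmul f \<in> Hsp E}"

definition Tshift :: "complex \<Rightarrow> (complex \<Rightarrow> 'x::complex_hilbert) \<Rightarrow> complex \<Rightarrow> 'x" where
  "Tshift \<gamma> f z = Tmul f z - cscale \<gamma> (f z)"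

definition regular_type :: "('h::complex_hilbert \<Rightarrow> complex \<Rightarrow> 'x::complex_hilbert) \<Rightarrow> complex \<Rightarrow> bool" where
  "regular_type E \<gamma> \<longleftrightarrow> (\<exists>C>0. \<forall>f\<in>Tdom E. normH E (Tshift \<gamma> f) \<ge> C * normH E f)"

definition Rshift_bounded_linear :: "('h::complex_hilbert \<Rightarrow> complex \<Rightarrow> 'x::complex_hilbert) \<Rightarrow> complex \<Rightarrow> bool" where
  "Rshift_bounded_linear E \<beta> \<longleftrightarrow>
     Rshift \<beta> ` Hzero E \<beta> \<subseteq> Hsp E \<and>
     (\<forall>f\<in>Hzero E \<beta>. \<forall>g\<in>Hzero E \<beta>. \<forall>c.
        Rshift \<beta> (\<lambda>z. f z + g z) = (\<lambda>z. Rshift \<beta> f z + Rshift \<beta> g z) \<and>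
        Rshift \<beta> (\<lambda>z. cscale c (f z)) = (\<lambda>z. cscale c (Rshift \<beta> f z))) \<and>
     (\<exists>C. \<forall>f\<in>Hzero E \<beta>. normH E (Rshift \<beta> f) \<le> C * normH E f)"

end

theory Submission
  imports Defs
begin

context complex_hilbert begin
subclass banach ..
end

lemma closed_graph_bounded:
  fixes T :: "'a::banach \<Rightarrow> 'b::banach" and Z :: "'a set"
  assumes Zc: "closed Z" and Z0: "0 \<in> Z"
    and Zadd: "\<And>x y. x\<in>Z \<Longrightarrow> y\<in>Z \<Longrightarrow> x + y \<in> Z"
    and Zsc: "\<And>c x. x\<in>Z \<Longrightarrow> c *\<^sub>R x \<in> Z"
    and Tadd: "\<And>x y. x\<in>Z \<Longrightarrow> y\<in>Z \<Longrightarrow> T (x + y) = T x + T y"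
    and Tsc: "\<And>c x. x\<in>Z \<Longrightarrow> T (c *\<^sub>R x) = c *\<^sub>R T x"
    and Tcl: "\<And>x y x0. (\<And>k. x k \<in> Z) \<Longrightarrow> x \<longlonglongrightarrow> x0 \<Longrightarrow> (\<lambda>k. T (x k)) \<longlonglongrightarrow> y \<Longrightarrow> T x0 = y"
  shows "\<exists>C. \<forall>x\<in>Z. norm (T x) \<le> C * norm x"
proof -
  have Zm: "x - y \<in> Z" if "x \<in> Z" "y \<in> Z" for x y
    using Zadd[OF that(1) Zsc[OF that(2), of "-1"]] by simp
  have Tm: "T (x - y) = T x - T y" if "x \<in> Z" "y \<in> Z" for x y
    using Tadd[OF that(1) Zsc[OF that(2), of "-1"]] Tsc[OF that(2), of "-1"] by simp
  define S where "S n = {x\<in>Z. norm (T x) \<le> real n}" for n :: nat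
  define X where "X = top_of_set Z"
  have "\<exists>n. X interior_of closure (S n) \<noteq> {}"
  proof (rule ccontr)
    assume "\<not> ?thesis"
    then have emp: "X interior_of closure (S n) = {}" for n by blast
    have "X interior_of \<Union>(range (\<lambda>n. closure (S n))) = {}"
    proof (rule Baire_category_alt)
      show "completely_metrizable_space X \<or> locally_compact_space X \<and> regular_space X"
        unfolding X_def
        by (simp add: Zc completely_metrizable_space_closedin completely_metrizable_space_euclidean)
      show "countable (range (\<lambda>n. closure (S n)))" by simp
      fix C assume "C \<in> range (\<lambda>n. closure (S n))"
      then obtain n where C: "C = closure (S n)" by blast
      have "S n \<subseteq> Z" by (auto simp: S_def)
      then have "closure (S n) \<subseteq> Z" using Zc closure_minimal by blast
      then show "closedin X C \<and> X interior_of C = {}"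
        unfolding C X_def using emp[of n] X_def by (simp add: closed_subset)
    qed
    moreover have "\<Union>(range (\<lambda>n. closure (S n))) = Z"
    proof
      show "\<Union>(range (\<lambda>n. closure (S n))) \<subseteq> Z"
      proof -
        have "closure (S n) \<subseteq> Z" for n
          using Zc closure_minimal[of "S n" Z] by (auto simp: S_def)
        then show ?thesis by blast
      qed
      show "Z \<subseteq> \<Union>(range (\<lambda>n. closure (S n)))"
      proof
        fix x assume "x \<in> Z"
        obtain n :: nat where "norm (T x) \<le> real n" using real_arch_simple by blast
        then have "x \<in> S n" using \<open>x\<in>Z\<close> by (simp add: S_def)
        then show "x \<in> \<Union>(range (\<lambda>n. closure (S n)))" using closure_subset by blast
      qed
    qed
    ultimately have "X interior_of Z = {}" by simp
    moreover have "X interior_of Z = Z" unfolding X_def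
      by (metis interior_of_topspace topspace_euclidean_subtopology)
    ultimately show False using Z0 by simp
  qed
  then obtain n x0 U where U: "openin X U" "x0 \<in> U" "U \<subseteq> closure (S n)"
    unfolding interior_of_def by blast
  then obtain r where r: "r > 0" "\<And>x'. x' \<in> Z \<Longrightarrow> dist x' x0 < r \<Longrightarrow> x' \<in> U"
    and x0Z: "x0 \<in> Z"
    unfolding X_def openin_euclidean_subtopology_iff by blast
  have step2: "\<exists>s\<in>Z. dist s y < e \<and> norm (T s) \<le> 2 * real n"
    if y: "y \<in> Z" "norm y < r" and e: "e > 0" for y e
  proof -
    have "x0 + y \<in> Z" using Zadd x0Z y by blast
    moreover have "dist (x0 + y) x0 < r" using y by (simp add: dist_norm)
    ultimately have "x0 + y \<in> closure (S n)" using r U by blast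
    then obtain s1 where s1: "s1 \<in> S n" "dist s1 (x0 + y) < e/2"
      using e unfolding closure_approachable by (meson half_gt_zero)
    have "x0 \<in> closure (S n)" using U by blast
    then obtain s2 where s2: "s2 \<in> S n" "dist s2 x0 < e/2"
      using e unfolding closure_approachable by (meson half_gt_zero)
    have Z12: "s1 \<in> Z" "s2 \<in> Z" using s1 s2 by (auto simp: S_def)
    have "dist (s1 - s2) y \<le> dist s1 (x0 + y) + dist s2 x0"
    proof -
      have "(s1 - s2) - y = (s1 - (x0 + y)) - (s2 - x0)" by (simp add: algebra_simps)
      then show ?thesis unfolding dist_norm by (metis norm_triangle_ineq4)
    qed
    also have "\<dots> < e" using s1 s2 by simp
    finally have "dist (s1 - s2) y < e" .
    moreover have "norm (T (s1 - s2)) \<le> 2 * real n"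
    proof -
      have "norm (T (s1 - s2)) \<le> norm (T s1) + norm (T s2)"
        using Tm[OF Z12] norm_triangle_ineq4 by metis
      also have "\<dots> \<le> 2 * real n" using s1 s2 by (simp add: S_def)
      finally show ?thesis .
    qed
    ultimately show ?thesis using Zm[OF Z12] by blast
  qed
  define M where "M = 4 * real n / r"
  have M0: "M \<ge> 0" using r by (simp add: M_def)
  have step3: "\<exists>s\<in>Z. norm (y - s) \<le> norm y / 2 \<and> norm (T s) \<le> M * norm y"
    if y: "y \<in> Z" for y
  proof (cases "y = 0")
    case True
    then show ?thesis using Z0 Tsc[OF Z0, of 0] by (intro bexI[of _ 0]) auto
  next
    case False
    then have ny: "norm y > 0" by simp
    define c where "c = r / (2 * norm y)"
    have c0: "c > 0" using ny r by (simp add: c_def)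
    have "norm (c *\<^sub>R y) < r" using ny r by (simp add: c_def)
    moreover have "c *\<^sub>R y \<in> Z" using Zsc y by blast
    moreover have "c * (norm y / 2) > 0" using c0 ny by simp
    ultimately obtain s' where s': "s' \<in> Z" "dist s' (c *\<^sub>R y) < c * (norm y / 2)"
      "norm (T s') \<le> 2 * real n"
      using step2 by blast
    define s where "s = (1/c) *\<^sub>R s'"
    have "s \<in> Z" using Zsc s' by (simp add: s_def)
    moreover have "norm (y - s) \<le> norm y / 2"
    proof -
      have "y - s = (1/c) *\<^sub>R (c *\<^sub>R y - s')" using c0
        by (simp add: s_def algebra_simps)
      then have "norm (y - s) = (1/c) * norm (s' - c *\<^sub>R y)"
        using c0 by (simp add: norm_minus_commute)
      also have "\<dots> \<le> (1/c) * (c * (norm y / 2))"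
        using s'(2) c0 by (intro mult_left_mono) (auto simp: dist_norm)
      finally show ?thesis using c0 by simp
    qed
    moreover have "norm (T s) \<le> M * norm y"
    proof -
      have "norm (T s) = (1/c) * norm (T s')" using Tsc[OF s'(1)] c0 by (simp add: s_def)
      also have "\<dots> \<le> (1/c) * (2 * real n)" using s'(3) c0 by (intro mult_left_mono) auto
      also have "\<dots> = M * norm y" using ny r by (simp add: c_def M_def field_simps)
      finally show ?thesis .
    qed
    ultimately show ?thesis by blast
  qed
  then obtain f where f: "\<And>y. y \<in> Z \<Longrightarrow> f y \<in> Z \<and> norm (y - f y) \<le> norm y / 2 \<and> norm (T (f y)) \<le> M * norm y"
    by metis
  show ?thesis
  proof (intro exI ballI)
    fix x assume xZ: "x \<in> Z"
    define rr where "rr k = ((\<lambda>y. y - f y) ^^ k) x" for k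
    have rrS: "rr (Suc k) = rr k - f (rr k)" for k by (simp add: rr_def)
    have rrZ: "rr k \<in> Z \<and> norm (rr k) \<le> norm x / 2 ^ k" for k
    proof (induction k)
      case 0 then show ?case using xZ by (simp add: rr_def)
    next
      case (Suc k)
      then have "f (rr k) \<in> Z" "norm (rr k - f (rr k)) \<le> norm (rr k) / 2" using f by auto
      have e1: "norm (rr k - f (rr k)) * 2 * 2^k \<le> norm (rr k) * 2^k"
        using \<open>norm (rr k - f (rr k)) \<le> norm (rr k) / 2\<close> by (intro mult_right_mono) auto
      have e2: "norm (rr k) * 2 ^ k \<le> norm x" using Suc by (simp add: divide_simps)
      have "norm (rr k - f (rr k)) * (2 * 2^k) \<le> norm x"
        by (metis e1 e2 mult.assoc order_trans)
      then show ?case using Suc Zm[of "rr k" "f (rr k)"] \<open>f (rr k) \<in> Z\<close>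
        by (simp add: rrS divide_simps)
    qed
    define s where "s k = f (rr k)" for k
    have sZ: "s k \<in> Z" for k using f rrZ by (simp add: s_def)
    have Ts: "norm (T (s k)) \<le> M * norm x * (1/2) ^ k" for k
    proof -
      have "norm (T (s k)) \<le> M * norm (rr k)" using f rrZ by (simp add: s_def)
      also have "\<dots> \<le> M * (norm x / 2 ^ k)" using rrZ M0 by (intro mult_left_mono) auto
      finally show ?thesis by (simp add: power_divide)
    qed
    have psZ: "(\<Sum>i<m. s i) \<in> Z" for m
      by (induction m) (auto simp: Z0 Zadd sZ)
    have ps: "x - (\<Sum>i<m. s i) = rr m" for m
      by (induction m) (auto simp: rr_def s_def algebra_simps)
    have Tps: "T (\<Sum>i<m. s i) = (\<Sum>i<m. T (s i))" for m
    proof (induction m)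
      case 0 then show ?case using Tsc[OF Z0, of 0] by simp
    next
      case (Suc m) then show ?case using Tadd[OF psZ sZ] by simp
    qed
    have "(\<lambda>m. rr m) \<longlonglongrightarrow> 0"
    proof (rule tendsto_norm_zero_cancel, rule Lim_null_comparison)
      show "\<forall>\<^sub>F m in sequentially. norm (norm (rr m)) \<le> norm x * (1/2)^m"
        using rrZ by (simp add: power_divide)
      show "(\<lambda>m. norm x * (1/2)^m) \<longlonglongrightarrow> 0"
        by (intro tendsto_mult_right_zero LIMSEQ_power_zero) auto
    qed
    then have c0: "(\<lambda>m. x - (\<Sum>i<m. s i)) \<longlonglongrightarrow> 0" using ps by simp
    then have conv: "(\<lambda>m. (\<Sum>i<m. s i)) \<longlonglongrightarrow> x"
      using tendsto_diff[OF tendsto_const[of x] c0] by simp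
    have sg: "summable (\<lambda>k. M * norm x * (1/2::real) ^ k)"
      by (intro summable_mult summable_geometric) auto
    have summ: "summable (\<lambda>k. T (s k))"
      by (rule summable_comparison_test[OF _ sg]) (use Ts in auto)
    then have "(\<lambda>m. T (\<Sum>i<m. s i)) \<longlonglongrightarrow> (\<Sum>k. T (s k))"
      unfolding Tps by (rule summable_LIMSEQ)
    then have eq: "T x = (\<Sum>k. T (s k))" by (rule Tcl[OF psZ conv])
    have "norm (\<Sum>k. T (s k)) \<le> (\<Sum>k. M * norm x * (1/2::real) ^ k)"
      by (rule norm_suminf_le[OF Ts sg])
    also have "\<dots> = 2 * M * norm x"
      by (simp add: suminf_mult suminf_geometric)
    finally show "norm (T x) \<le> (2 * M) * norm x" using eq by simp
  qed
qed

lemma cJ_zero: "cJ (0::'a::complex_hilbert) = 0"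
  using cJ_scaleR[of 0 "0::'a"] by simp
lemma cJ_minus: "cJ (- x::'a::complex_hilbert) = - cJ x"
  using cJ_scaleR[of "-1" x] by simp
lemma cJ_diff: "cJ (x - y::'a::complex_hilbert) = cJ x - cJ y"
  by (metis cJ_add cJ_minus diff_conv_add_uminus)
lemma inner_cJ_left: "inner (cJ x) (y::'a::complex_hilbert) = - inner x (cJ y)"
  by (metis cJ_cJ cJ_inner inner_minus_left)
lemma norm_cJ: "norm (cJ x) = norm (x::'a::complex_hilbert)"
  by (simp add: norm_eq_sqrt_inner cJ_inner)

lemma cscale_add_right: "cscale c (x + y) = cscale c x + cscale c (y::'a::complex_hilbert)"
  by (simp add: cscale_def cJ_add algebra_simps)
lemma cscale_add_left: "cscale (c + d) x = cscale c x + cscale d (x::'a::complex_hilbert)"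
  by (simp add: cscale_def algebra_simps)
lemma cscale_mult: "cscale (c * d) x = cscale c (cscale d (x::'a::complex_hilbert))"
  by (simp add: cscale_def cJ_add cJ_scaleR cJ_cJ algebra_simps)
lemma cscale_one[simp]: "cscale 1 x = (x::'a::complex_hilbert)"
  by (simp add: cscale_def)
lemma cscale_zero_left[simp]: "cscale 0 x = (0::'a::complex_hilbert)"
  by (simp add: cscale_def)
lemma cscale_zero_right[simp]: "cscale c 0 = (0::'a::complex_hilbert)"
  by (simp add: cscale_def cJ_zero)
lemma cscale_of_real: "cscale (complex_of_real r) x = r *\<^sub>R (x::'a::complex_hilbert)"
  by (simp add: cscale_def)
lemma cscale_cJ: "cscale c (cJ x) = cJ (cscale c (x::'a::complex_hilbert))"
  by (simp add: cscale_def cJ_add cJ_scaleR cJ_cJ)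
lemma cscale_scaleR: "cscale c (r *\<^sub>R x) = r *\<^sub>R cscale c (x::'a::complex_hilbert)"
  by (simp add: cscale_def cJ_scaleR algebra_simps)
lemma cscale_minus_right: "cscale c (- x) = - cscale c (x::'a::complex_hilbert)"
  by (simp add: cscale_def cJ_minus)
lemma cscale_diff_right: "cscale c (x - y) = cscale c x - cscale c (y::'a::complex_hilbert)"
  by (simp add: cscale_def cJ_diff algebra_simps)
lemma cscale_diff_left: "cscale (c - d) x = cscale c x - cscale d (x::'a::complex_hilbert)"
  by (simp add: cscale_def algebra_simps)
lemma cscale_comm: "cscale c (cscale d x) = cscale d (cscale c (x::'a::complex_hilbert))"
  by (metis cscale_mult mult.commute)
lemma inner_cscale_left: "inner (cscale c v) u = inner v (cscale (cnj c) (u::'a::complex_hilbert))"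
  by (simp add: cscale_def inner_add_left inner_add_right inner_cJ_left inner_diff_right)

lemma bounded_bilinear_cscale: "bounded_bilinear (cscale :: complex \<Rightarrow> 'a::complex_hilbert \<Rightarrow> 'a)"
proof
  fix a a' :: complex and b b' :: 'a and r :: real
  show "cscale (a + a') b = cscale a b + cscale a' b" by (rule cscale_add_left)
  show "cscale a (b + b') = cscale a b + cscale a b'" by (rule cscale_add_right)
  show "cscale (r *\<^sub>R a) b = r *\<^sub>R cscale a b" by (simp add: cscale_def scaleR_conv_of_real algebra_simps)
  show "cscale a (r *\<^sub>R b) = r *\<^sub>R cscale a b" by (rule cscale_scaleR)
next
  show "\<exists>K. \<forall>(a::complex) (b::'a). norm (cscale a b) \<le> norm a * norm b * K"
  proof (intro exI allI)
    fix a :: complex and b :: 'a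
    have "norm (cscale a b) \<le> norm (Re a *\<^sub>R b) + norm (Im a *\<^sub>R cJ b)"
      unfolding cscale_def by (rule norm_triangle_ineq)
    also have "\<dots> = \<bar>Re a\<bar> * norm b + \<bar>Im a\<bar> * norm b" by (simp add: norm_cJ)
    also have "\<dots> \<le> norm a * norm b + norm a * norm b"
      by (intro add_mono mult_right_mono abs_Re_le_cmod abs_Im_le_cmod) auto
    finally show "norm (cscale a b) \<le> norm a * norm b * 2" by (simp add: mult_ac)
  qed
qed

lemma bounded_linear_cscale: "bounded_linear (cscale c :: 'a::complex_hilbert \<Rightarrow> 'a)"
  by (rule bounded_bilinear.bounded_linear_right[OF bounded_bilinear_cscale])

lemma has_cderiv_unique: "has_cderiv f v z \<Longrightarrow> has_cderiv f w z \<Longrightarrow> v = w"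
  unfolding has_cderiv_def
  by (metis cscale_one has_derivative_unique)

lemma cderiv_eq: "has_cderiv f v z \<Longrightarrow> cderiv f z = v"
  unfolding cderiv_def using has_cderiv_unique by (metis someI_ex)

lemma centire_has: "centire f \<Longrightarrow> has_cderiv f (cderiv f z) z"
  unfolding centire_def cderiv_def by (metis someI_ex)

lemma centire_isCont: "centire f \<Longrightarrow> isCont f z"
  using centire_has[of f z] has_derivative_continuous unfolding has_cderiv_def by blast

lemma has_cderiv_add: "has_cderiv f v z \<Longrightarrow> has_cderiv g w z \<Longrightarrow> has_cderiv (\<lambda>z. f z + g z) (v + w) z"
  unfolding has_cderiv_def by (drule (1) has_derivative_add) (simp add: cscale_add_right)

lemma has_cderiv_scale: "has_cderiv f v z \<Longrightarrow> has_cderiv (\<lambda>z. cscale c (f z)) (cscale c v) z"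
  unfolding has_cderiv_def
  by (drule bounded_linear.has_derivative[OF bounded_linear_cscale[of c]]) (simp add: cscale_comm)

lemma has_cderiv_prod: "has_cderiv g w \<beta> \<Longrightarrow> has_cderiv (\<lambda>z. cscale (z - \<beta>) (g z)) (g \<beta>) \<beta>"
  unfolding has_cderiv_def
proof -
  assume g: "(g has_derivative (\<lambda>h. cscale h w)) (at \<beta>)"
  have d: "((\<lambda>z. z - \<beta>) has_derivative (\<lambda>h. h)) (at \<beta>)"
    by (intro derivative_eq_intros) auto
  from bounded_bilinear.FDERIV[OF bounded_bilinear_cscale d g]
  show "((\<lambda>z. cscale (z - \<beta>) (g z)) has_derivative (\<lambda>h. cscale h (g \<beta>))) (at \<beta>)"
    by simp
qed

lemma cscale_uminus_left: "cscale (-c) x = - cscale c (x::'a::complex_hilbert)"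
  by (simp add: cscale_def)

lemma rk_inj: "rkhs E K \<Longrightarrow> inj E" by (simp add: rkhs_def)
lemma rk_add: "rkhs E K \<Longrightarrow> E (a + b) = (\<lambda>z. E a z + E b z)" by (simp add: rkhs_def)
lemma rk_scaleR: "rkhs E K \<Longrightarrow> E (r *\<^sub>R a) = (\<lambda>z. r *\<^sub>R E a z)" by (simp add: rkhs_def)
lemma rk_cJ: "rkhs E K \<Longrightarrow> E (cJ a) = (\<lambda>z. cJ (E a z))" by (simp add: rkhs_def)
lemma rk_entire: "rkhs E K \<Longrightarrow> centire (E a)" by (simp add: rkhs_def)

lemma rk_cscale: "rkhs E K \<Longrightarrow> E (Re c *\<^sub>R a + Im c *\<^sub>R cJ a) = (\<lambda>z. cscale c (E a z))"
  by (simp add: rk_add rk_scaleR rk_cJ cscale_def)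

lemma rk_zero: "rkhs E K \<Longrightarrow> E 0 = (\<lambda>z. 0)"
  using rk_scaleR[of E K 0 0] by simp

lemma Hsp_add: "rkhs E K \<Longrightarrow> f \<in> Hsp E \<Longrightarrow> g \<in> Hsp E \<Longrightarrow> (\<lambda>z. f z + g z) \<in> Hsp E"
proof -
  assume rk: "rkhs E K" and f: "f \<in> Hsp E" and g: "g \<in> Hsp E"
  then obtain a b where "f = E a" "g = E b" by (auto simp: Hsp_def)
  then have "(\<lambda>z. f z + g z) = E (a + b)" by (simp add: rk_add[OF rk])
  then show ?thesis by (simp add: Hsp_def)
qed

lemma Hsp_cscale: "rkhs E K \<Longrightarrow> f \<in> Hsp E \<Longrightarrow> (\<lambda>z. cscale c (f z)) \<in> Hsp E"
proof -
  assume rk: "rkhs E K" and f: "f \<in> Hsp E"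
  then obtain a where "f = E a" by (auto simp: Hsp_def)
  then have "(\<lambda>z. cscale c (f z)) = E (Re c *\<^sub>R a + Im c *\<^sub>R cJ a)" by (simp add: rk_cscale[OF rk])
  then show ?thesis by (simp add: Hsp_def)
qed

lemma Hsp_entire: "rkhs E K \<Longrightarrow> f \<in> Hsp E \<Longrightarrow> centire f"
  unfolding Hsp_def using rk_entire by blast

lemma rk_kernel:
  assumes "rkhs E K"
  obtains kk where "\<And>a \<gamma> u. inner a (kk \<gamma> u) = inner (E a \<gamma>) u"
proof -
  from assms have "\<forall>\<gamma> u. \<exists>k. E k = (\<lambda>z. K \<gamma> z u) \<and> (\<forall>h. cinner h k = cinner (E h \<gamma>) u)"
    by (simp add: rkhs_def)
  then obtain kk where kk: "\<And>\<gamma> u h. cinner h (kk \<gamma> u) = cinner (E h \<gamma>) u" by metis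
  show ?thesis
  proof (rule that)
    fix a \<gamma> u
    from kk[of a \<gamma> u] show "inner a (kk \<gamma> u) = inner (E a \<gamma>) u"
      by (simp add: cinner_def)
  qed
qed

lemma Rshift_add: "centire f \<Longrightarrow> centire g \<Longrightarrow>
   Rshift \<beta> (\<lambda>z. f z + g z) = (\<lambda>z. Rshift \<beta> f z + Rshift \<beta> g z)"
  by (auto simp: Rshift_def cscale_add_right cderiv_eq[OF has_cderiv_add[OF centire_has centire_has]])

lemma Rshift_scale: "centire f \<Longrightarrow>
   Rshift \<beta> (\<lambda>z. cscale c (f z)) = (\<lambda>z. cscale c (Rshift \<beta> f z))"
  by (auto simp: Rshift_def cscale_comm cderiv_eq[OF has_cderiv_scale[OF centire_has]])

lemma Tshift_eq: "Tshift \<beta> g = (\<lambda>z. cscale (z - \<beta>) (g z))"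
  by (simp add: Tshift_def Tmul_def cscale_diff_left fun_eq_iff)

lemma T1:
  assumes rk: "rkhs E K" and g: "g \<in> Tdom E"
  shows "Tshift \<beta> g \<in> Hzero E \<beta> \<and> Rshift \<beta> (Tshift \<beta> g) = g"
proof
  have gH: "g \<in> Hsp E" "Tmul g \<in> Hsp E" using g by (auto simp: Tdom_def)
  have "Tshift \<beta> g = (\<lambda>z. Tmul g z + cscale (-\<beta>) (g z))"
    by (simp add: Tshift_def cscale_uminus_left fun_eq_iff)
  then have "Tshift \<beta> g \<in> Hsp E" using Hsp_add[OF rk gH(2) Hsp_cscale[OF rk gH(1)]] by simp
  then show "Tshift \<beta> g \<in> Hzero E \<beta>" by (simp add: Hzero_def Tshift_eq)
  have ent: "centire g" using Hsp_entire[OF rk gH(1)] .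
  show "Rshift \<beta> (Tshift \<beta> g) = g"
  proof
    fix z show "Rshift \<beta> (Tshift \<beta> g) z = g z"
    proof (cases "z = \<beta>")
      case True
      then show ?thesis unfolding Rshift_def Tshift_eq
        using cderiv_eq[OF has_cderiv_prod[OF centire_has[OF ent]]] by simp
    next
      case False
      then have "cscale (1 / (z - \<beta>)) (cscale (z - \<beta>) (g z)) = g z"
        by (simp add: cscale_mult[symmetric])
      then show ?thesis using False by (simp add: Rshift_def Tshift_eq)
    qed
  qed
qed

lemma T2:
  assumes rk: "rkhs E K" and f: "f \<in> Hzero E \<beta>" and Rf: "Rshift \<beta> f \<in> Hsp E"
  shows "Rshift \<beta> f \<in> Tdom E" and "Tshift \<beta> (Rshift \<beta> f) = f"
proof -
  have f0: "f \<beta> = 0" and fH: "f \<in> Hsp E" using f by (auto simp: Hzero_def)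
  have "Tmul (Rshift \<beta> f) = (\<lambda>z. f z + cscale \<beta> (Rshift \<beta> f z))"
  proof
    fix z show "Tmul (Rshift \<beta> f) z = f z + cscale \<beta> (Rshift \<beta> f z)"
    proof (cases "z = \<beta>")
      case True then show ?thesis using f0 by (simp add: Tmul_def)
    next
      case False
      have "z / (z - \<beta>) = 1 + \<beta> / (z - \<beta>)" using False
        by (simp add: field_simps)
      then have "cscale (z / (z - \<beta>)) (f z) = f z + cscale (\<beta> / (z - \<beta>)) (f z)"
        by (simp add: cscale_add_left)
      then show ?thesis using False
        by (simp add: Tmul_def Rshift_def cscale_mult[symmetric])
    qed
  qed
  then have "Tmul (Rshift \<beta> f) \<in> Hsp E"
    using Hsp_add[OF rk fH Hsp_cscale[OF rk Rf]] by simp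
  then show "Rshift \<beta> f \<in> Tdom E" using Rf by (simp add: Tdom_def)
  show "Tshift \<beta> (Rshift \<beta> f) = f"
  proof
    fix z show "Tshift \<beta> (Rshift \<beta> f) z = f z"
    proof (cases "z = \<beta>")
      case True then show ?thesis using f0 by (simp add: Tshift_eq)
    next
      case False
      then show ?thesis by (simp add: Tshift_eq Rshift_def cscale_mult[symmetric])
    qed
  qed
qed

theorem lemma2:
  fixes E :: "'h::complex_hilbert \<Rightarrow> complex \<Rightarrow> 'x::complex_hilbert"
    and K :: "complex \<Rightarrow> complex \<Rightarrow> 'x \<Rightarrow> 'x"
  assumes sep: "separable_space (euclidean :: 'x topology)"
    and rk: "rkhs E K"
    and nonzero: "Hsp E \<noteq> {\<lambda>z. 0}"
  shows "(Rshift \<beta> ` Hzero E \<beta> \<subseteq> Hsp E \<longleftrightarrow> Rshift \<beta> ` Hzero E \<beta> = Tdom E) \<and>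
         (Rshift \<beta> ` Hzero E \<beta> \<subseteq> Hsp E \<longrightarrow>
            Rshift_bounded_linear E \<beta> \<and>
            Tshift \<beta> ` Tdom E = Hzero E \<beta> \<and>
            regular_type E \<beta>)"
proof -
  have TdR: "Tdom E \<subseteq> Rshift \<beta> ` Hzero E \<beta>"
  proof
    fix g assume "g \<in> Tdom E"
    from T1[OF rk this, of \<beta>] show "g \<in> Rshift \<beta> ` Hzero E \<beta>" by (metis image_eqI)
  qed
  have TdH: "Tdom E \<subseteq> Hsp E" by (auto simp: Tdom_def)
  have part1: "Rshift \<beta> ` Hzero E \<beta> \<subseteq> Hsp E \<longleftrightarrow> Rshift \<beta> ` Hzero E \<beta> = Tdom E"
  proof
    assume P: "Rshift \<beta> ` Hzero E \<beta> \<subseteq> Hsp E"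
    have "Rshift \<beta> ` Hzero E \<beta> \<subseteq> Tdom E"
      using T2(1)[OF rk] P by blast
    then show "Rshift \<beta> ` Hzero E \<beta> = Tdom E" using TdR by blast
  next
    assume "Rshift \<beta> ` Hzero E \<beta> = Tdom E"
    then show "Rshift \<beta> ` Hzero E \<beta> \<subseteq> Hsp E" using TdH by simp
  qed
  moreover have "Rshift_bounded_linear E \<beta> \<and> Tshift \<beta> ` Tdom E = Hzero E \<beta> \<and> regular_type E \<beta>"
    if P: "Rshift \<beta> ` Hzero E \<beta> \<subseteq> Hsp E"
  proof -
    have inj: "inj E" using rk by (rule rk_inj)
    obtain kk where kk: "\<And>a \<gamma> u. inner a (kk \<gamma> u) = inner (E a \<gamma>) u"
      using rk_kernel[OF rk] by blast
    define Z where "Z = {a. E a \<beta> = 0}"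
    define Rb where "Rb a = inv E (Rshift \<beta> (E a))" for a
    have HZ: "Hzero E \<beta> = E ` Z" by (auto simp: Hzero_def Hsp_def Z_def)
    have ERb: "E (Rb a) = Rshift \<beta> (E a)" if "a \<in> Z" for a
    proof -
      have "Rshift \<beta> (E a) \<in> range E" using P that HZ by (auto simp: Hsp_def)
      then show ?thesis by (simp add: Rb_def f_inv_into_f)
    qed
    have normE: "normH E (E a) = norm a" for a by (simp add: normH_def inv_f_f[OF inj])
    have ent: "centire (E a)" for a using rk by (rule rk_entire)
    have Zadd: "a + b \<in> Z" if "a \<in> Z" "b \<in> Z" for a b
      using that by (simp add: Z_def rk_add[OF rk])
    have Zsc: "c *\<^sub>R a \<in> Z" if "a \<in> Z" for a c
      using that by (simp add: Z_def rk_scaleR[OF rk])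
    have Z0: "0 \<in> Z" by (simp add: Z_def rk_zero[OF rk])
    have Zc: "closed Z"
    proof -
      have "Z = (\<Inter>u. {a. inner a (kk \<beta> u) = 0})"
        by (auto simp: Z_def kk)
      moreover have "closed {a. inner a (kk \<beta> u) = 0}" for u
        by (intro closed_Collect_eq continuous_intros)
      ultimately show ?thesis by auto
    qed
    have Tadd: "Rb (a + b) = Rb a + Rb b" if "a \<in> Z" "b \<in> Z" for a b
    proof -
      have "E (Rb a + Rb b) = (\<lambda>z. Rshift \<beta> (E a) z + Rshift \<beta> (E b) z)"
        using that by (simp add: rk_add[OF rk] ERb)
      also have "\<dots> = Rshift \<beta> (E (a + b))"
        by (simp add: rk_add[OF rk] Rshift_add[OF ent ent])
      also have "\<dots> = E (Rb (a + b))" using ERb Zadd that by simp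
      finally show ?thesis using inj by (simp add: inj_eq)
    qed
    have Tsc: "Rb (c *\<^sub>R a) = c *\<^sub>R Rb a" if "a \<in> Z" for a c
    proof -
      have "E (c *\<^sub>R Rb a) = (\<lambda>z. cscale (complex_of_real c) (Rshift \<beta> (E a) z))"
        using that by (simp add: rk_scaleR[OF rk] ERb cscale_of_real)
      also have "\<dots> = Rshift \<beta> (\<lambda>z. cscale (complex_of_real c) (E a z))"
        by (simp add: Rshift_scale[OF ent])
      also have "\<dots> = Rshift \<beta> (E (c *\<^sub>R a))"
        by (simp add: rk_scaleR[OF rk] cscale_of_real)
      also have "\<dots> = E (Rb (c *\<^sub>R a))" using ERb Zsc that by simp
      finally show ?thesis using inj by (simp add: inj_eq)
    qed
    have Tcl: "Rb x0 = y" if xZ: "\<And>k. x k \<in> Z" and xc: "x \<longlonglongrightarrow> x0"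
      and yc: "(\<lambda>k. Rb (x k)) \<longlonglongrightarrow> y" for x x0 y
    proof -
      have x0Z: "x0 \<in> Z" using Zc xZ xc closed_sequentially by blast
      have off: "E y \<gamma> = E (Rb x0) \<gamma>" if "\<gamma> \<noteq> \<beta>" for \<gamma>
      proof -
        define c where "c = 1 / (\<gamma> - \<beta>)"
        have eq: "inner (E (Rb a) \<gamma>) u = inner a (kk \<gamma> (cscale (cnj c) u))" if "a \<in> Z" for a u
          using that \<open>\<gamma> \<noteq> \<beta>\<close>
          by (simp add: ERb Rshift_def kk inner_cscale_left c_def)
        have "inner (E y \<gamma>) u = inner (E (Rb x0) \<gamma>) u" for u
        proof -
          have l1: "(\<lambda>k. inner (Rb (x k)) (kk \<gamma> u)) \<longlonglongrightarrow> inner y (kk \<gamma> u)"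
            by (intro tendsto_intros yc)
          have l2: "(\<lambda>k. inner (x k) (kk \<gamma> (cscale (cnj c) u))) \<longlonglongrightarrow> inner x0 (kk \<gamma> (cscale (cnj c) u))"
            by (intro tendsto_intros xc)
          have "(\<lambda>k. inner (Rb (x k)) (kk \<gamma> u)) = (\<lambda>k. inner (x k) (kk \<gamma> (cscale (cnj c) u)))"
            using eq xZ by (simp add: kk)
          then have "inner y (kk \<gamma> u) = inner x0 (kk \<gamma> (cscale (cnj c) u))"
            using l1 l2 LIMSEQ_unique by metis
          then show ?thesis using eq[OF x0Z] by (simp add: kk)
        qed
        then have "inner (E y \<gamma> - E (Rb x0) \<gamma>) (E y \<gamma> - E (Rb x0) \<gamma>) = 0"
          by (simp add: inner_diff_left)
        then show ?thesis by simp
      qed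
      have "E y = E (Rb x0)"
      proof
        fix z show "E y z = E (Rb x0) z"
        proof (cases "z = \<beta>")
          case False then show ?thesis by (rule off)
        next
          case True
          have c1: "(E y \<longlongrightarrow> E y \<beta>) (at \<beta>)" using centire_isCont[OF ent] isCont_def by blast
          have c2: "(E (Rb x0) \<longlongrightarrow> E (Rb x0) \<beta>) (at \<beta>)" using centire_isCont[OF ent] isCont_def by blast
          have "\<forall>\<^sub>F w in at \<beta>. E (Rb x0) w = E y w"
            using off by (auto simp: eventually_at_filter)
          then have "(E y \<longlongrightarrow> E (Rb x0) \<beta>) (at \<beta>)" by (rule Lim_transform_eventually[OF c2])
          then show ?thesis using c1 True LIM_unique by metis
        qed
      qed
      then show ?thesis using inj by (simp add: inj_eq)
    qed
    have "\<exists>C. \<forall>a\<in>Z. norm (Rb a) \<le> C * norm a"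
    proof (rule closed_graph_bounded[of Z Rb, OF Zc Z0])
      show "\<And>x y. x\<in>Z \<Longrightarrow> y\<in>Z \<Longrightarrow> x + y \<in> Z" by (rule Zadd)
      show "\<And>c x. x\<in>Z \<Longrightarrow> c *\<^sub>R x \<in> Z" by (rule Zsc)
      show "\<And>x y. x\<in>Z \<Longrightarrow> y\<in>Z \<Longrightarrow> Rb (x + y) = Rb x + Rb y" by (rule Tadd)
      show "\<And>c x. x\<in>Z \<Longrightarrow> Rb (c *\<^sub>R x) = c *\<^sub>R Rb x" by (rule Tsc)
      show "\<And>x y x0. (\<And>k. x k \<in> Z) \<Longrightarrow> x \<longlonglongrightarrow> x0 \<Longrightarrow> (\<lambda>k. Rb (x k)) \<longlonglongrightarrow> y \<Longrightarrow> Rb x0 = y"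
        by (rule Tcl)
    qed
    then obtain C where C: "\<forall>a\<in>Z. norm (Rb a) \<le> C * norm a" by (erule exE)
    have bnd: "normH E (Rshift \<beta> f) \<le> C * normH E f" if "f \<in> Hzero E \<beta>" for f
    proof -
      have "f \<in> E ` Z" using that HZ by simp
      then obtain a where a: "a \<in> Z" "f = E a" by (auto simp: image_iff)
      have "normH E (Rshift \<beta> f) = norm (Rb a)" using ERb[OF a(1)] normE[of "Rb a"] a(2) by simp
      moreover have "normH E f = norm a" using normE[of a] a(2) by simp
      ultimately show ?thesis using C a(1) by simp
    qed
    have RBL: "Rshift_bounded_linear E \<beta>"
      unfolding Rshift_bounded_linear_def
    proof (intro conjI ballI allI)
      show "Rshift \<beta> ` Hzero E \<beta> \<subseteq> Hsp E" by (rule P)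
      fix f g c assume f: "f \<in> Hzero E \<beta>" and g: "g \<in> Hzero E \<beta>"
      have ef: "centire f" and eg: "centire g" using f g Hsp_entire[OF rk] by (auto simp: Hzero_def)
      show "Rshift \<beta> (\<lambda>z. f z + g z) = (\<lambda>z. Rshift \<beta> f z + Rshift \<beta> g z)"
        by (rule Rshift_add[OF ef eg])
      show "Rshift \<beta> (\<lambda>z. cscale c (f z)) = (\<lambda>z. cscale c (Rshift \<beta> f z))"
        by (rule Rshift_scale[OF ef])
    next
      show "\<exists>C. \<forall>f\<in>Hzero E \<beta>. normH E (Rshift \<beta> f) \<le> C * normH E f"
        using bnd by blast
    qed
    have TS: "Tshift \<beta> ` Tdom E = Hzero E \<beta>"
    proof
      show "Tshift \<beta> ` Tdom E \<subseteq> Hzero E \<beta>" using T1[OF rk] by blast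
      show "Hzero E \<beta> \<subseteq> Tshift \<beta> ` Tdom E"
      proof
        fix f assume f: "f \<in> Hzero E \<beta>"
        then have Rf: "Rshift \<beta> f \<in> Hsp E" using P by blast
        show "f \<in> Tshift \<beta> ` Tdom E"
          using T2[OF rk f Rf] by (metis image_eqI)
      qed
    qed
    have RT: "regular_type E \<beta>"
      unfolding regular_type_def
    proof (intro exI[of _ "1 / max C 1"] conjI ballI)
      show "0 < 1 / max C 1" by simp
      fix g assume g: "g \<in> Tdom E"
      from T1[OF rk g] have f: "Tshift \<beta> g \<in> Hzero E \<beta>" and Rf: "Rshift \<beta> (Tshift \<beta> g) = g"
        by auto
      have "normH E g \<le> C * normH E (Tshift \<beta> g)" using bnd[OF f] Rf by simp
      also have "\<dots> \<le> max C 1 * normH E (Tshift \<beta> g)"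
        by (intro mult_right_mono) (auto simp: normH_def)
      finally have "normH E g \<le> max C 1 * normH E (Tshift \<beta> g)" .
      then show "1 / max C 1 * normH E g \<le> normH E (Tshift \<beta> g)"
        by (simp add: field_simps)
    qed
    show ?thesis using RBL TS RT by blast
  qed
  ultimately show ?thesis by blast
qed

end
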